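(* Let $\mathcal{G}$ be a connected $k$-uniform hypergraph with $n$ vertices, and let $\Delta$ be the maximum degree of $\mathcal{G}$. Then $\mathcal{G}$ is a $2$-design if and only if $\alpha_1(\mathcal{G})=\cdots=\alpha_n(\mathcal{G})=\frac{\Delta(k-1)}{n-1}$.
   Context: A $k$-uniform hypergraph $\mathcal{G}$ has vertex set $V(\mathcal{G})=[n]$ and edge set $E(\mathcal{G})$ of $k$-element subsets of $V(\mathcal{G})$; the degree $d_i$ of vertex $i$ is the number of edges containing it. Connectedness: any two vertices are joined by a path $v_0e_1v_1\cdots e_lv_l$ (distinct vertices, distinct edges, $v_{i-1},v_i\in e_i$). A $2$-$(n,b,k,r,\lambda)$ design is regarded as a $k$-uniform $r$-regular hypergraph on $n$ vertices with $b$ edges such that every pair of distinct vertices $x,y$ lies in exactly $\lambda$ common edges; $\mathcal{G}$ is a $2$-design if it is such a design for some parameters. For $\mathbf{x}\in\mathbb{R}^n$, $\mathcal{L}_\mathcal{G}\mathbf{x}^k=\sum_{\{i_1,\ldots,i_k\}\in E(\mathcal{G})}\left(x_{i_1}^k+\cdots+x_{i_k}^k-k\,x_{i_1}\cdots x_{i_k}\right)$; the inverse Perron value of vertex $j$ is $\alpha_j(\mathcal{G})=\min\{\mathcal{L}_\mathcal{G}\mathbf{x}^k : \mathbf{x}\in\mathbb{R}^n_+,\ \sum_{i=1}^n x_i^k=1,\ x_j=0\}$. *)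

theory Defs
  imports Complex_Main
begin

definition k_uniform_hypergraph :: "nat \<Rightarrow> nat \<Rightarrow> nat set set \<Rightarrow> bool" where
  "k_uniform_hypergraph n k E \<longleftrightarrow> (\<forall>e\<in>E. e \<subseteq> {1..n} \<and> card e = k)"

definition hdegree :: "nat set set \<Rightarrow> nat \<Rightarrow> nat" where
  "hdegree E i = card {e\<in>E. i \<in> e}"

definition max_degree :: "nat \<Rightarrow> nat set set \<Rightarrow> nat" where
  "max_degree n E = Max (hdegree E ` {1..n})"

definition is_hpath :: "nat set set \<Rightarrow> nat list \<Rightarrow> nat set list \<Rightarrow> bool" where
  "is_hpath E vs es \<longleftrightarrow> vs \<noteq> [] \<and> length es + 1 = length vs \<and> distinct vs \<and> distinct es
     \<and> (\<forall>i < length es. es ! i \<in> E \<and> vs ! i \<in> es ! i \<and> vs ! (Suc i) \<in> es ! i)"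

definition hconnected :: "nat \<Rightarrow> nat set set \<Rightarrow> bool" where
  "hconnected n E \<longleftrightarrow> (\<forall>u\<in>{1..n}. \<forall>v\<in>{1..n}.
     \<exists>vs es. is_hpath E vs es \<and> hd vs = u \<and> last vs = v)"

definition is_2_design_params :: "nat \<Rightarrow> nat \<Rightarrow> nat \<Rightarrow> nat \<Rightarrow> nat \<Rightarrow> nat set set \<Rightarrow> bool" where
  "is_2_design_params n b k r lam E \<longleftrightarrow> k_uniform_hypergraph n k E \<and> card E = b
     \<and> (\<forall>i\<in>{1..n}. hdegree E i = r)
     \<and> (\<forall>x\<in>{1..n}. \<forall>y\<in>{1..n}. x \<noteq> y \<longrightarrow> card {e\<in>E. x \<in> e \<and> y \<in> e} = lam)"

definition is_2_design :: "nat \<Rightarrow> nat \<Rightarrow> nat set set \<Rightarrow> bool" where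
  "is_2_design n k E \<longleftrightarrow> (\<exists>b r lam. is_2_design_params n b k r lam E)"

definition laplacian_form :: "nat \<Rightarrow> nat set set \<Rightarrow> (nat \<Rightarrow> real) \<Rightarrow> real" where
  "laplacian_form k E x = (\<Sum>e\<in>E. (\<Sum>i\<in>e. x i ^ k) - real k * (\<Prod>i\<in>e. x i))"

text \<open>Inverse Perron value of vertex j (the minimum is attained by compactness; we take Inf).\<close>
definition inverse_perron :: "nat \<Rightarrow> nat \<Rightarrow> nat set set \<Rightarrow> nat \<Rightarrow> real" where
  "inverse_perron n k E j = Inf {laplacian_form k E x | x.
      (\<forall>i\<in>{1..n}. x i \<ge> 0) \<and> (\<Sum>i=1..n. x i ^ k) = 1 \<and> x j = 0}"

end

theory Submission imports Defs "HOL-Analysis.Convex"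
begin

lemma amgm:
  fixes x :: "nat \<Rightarrow> real"
  assumes "finite e" "card e = k" "k > 0" "\<And>i. i\<in>e \<Longrightarrow> x i \<ge> 0"
  shows "real k * (\<Prod>i\<in>e. x i) \<le> (\<Sum>i\<in>e. x i ^ k)"
proof -
  have ne: "e \<noteq> {}" using assms by auto
  have "(\<Prod>i\<in>e. x i ^ k) powr (1 / card e) \<le> (\<Sum>i\<in>e. x i ^ k / card e)"
    by (rule arith_geom_mean) (use assms ne in auto)
  moreover have "(\<Prod>i\<in>e. x i ^ k) = (\<Prod>i\<in>e. x i) ^ k" by (simp add: prod_power_distrib)
  moreover have "((\<Prod>i\<in>e. x i) ^ k) powr (1 / k) = (\<Prod>i\<in>e. x i)"
  proof -
    have p: "(\<Prod>i\<in>e. x i) \<ge> 0" using assms(4) by (simp add: prod_nonneg)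
    show ?thesis
    proof (cases "(\<Prod>i\<in>e. x i) = 0")
      case True then show ?thesis using assms(3) by simp
    next
      case False
      then have "(\<Prod>i\<in>e. x i) > 0" using p by simp
      then show ?thesis using assms(3) by (simp add: powr_realpow[symmetric] powr_powr)
    qed
  qed
  moreover have "(\<Sum>i\<in>e. x i ^ k / card e) = (\<Sum>i\<in>e. x i ^ k) / k"
    by (simp add: sum_divide_distrib assms(2))
  ultimately have h: "(\<Prod>i\<in>e. x i) \<le> (\<Sum>i\<in>e. x i ^ k) / k" using assms(2) by simp
  then show ?thesis using assms(3) by (simp add: pos_le_divide_eq mult.commute)
qed

lemma lf_scale:
  assumes "\<forall>e\<in>E. card e = k"
  shows "laplacian_form k E (\<lambda>v. s * y v) = s^k * laplacian_form k E y"
  unfolding laplacian_form_def sum_distrib_left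
proof (rule sum.cong[OF refl])
  fix e assume "e \<in> E"
  then have "card e = k" using assms by auto
  then show "(\<Sum>i\<in>e. (s * y i) ^ k) - real k * (\<Prod>i\<in>e. s * y i) =
         s ^ k * ((\<Sum>i\<in>e. y i ^ k) - real k * prod y e)"
    by (simp add: power_mult_distrib prod.distrib sum_distrib_left algebra_simps)
qed

lemma lf_split:
  fixes x :: "nat \<Rightarrow> real"
  assumes "finite E" "x j = 0" "\<forall>e\<in>E. finite e"
  shows "laplacian_form k E x = (\<Sum>e\<in>{e\<in>E. j\<in>e}. \<Sum>v\<in>e. x v ^ k)
     + (\<Sum>e\<in>{e\<in>E. j\<notin>e}. (\<Sum>v\<in>e. x v ^ k) - real k * (\<Prod>v\<in>e. x v))"
proof -
  have "laplacian_form k E x = (\<Sum>e\<in>{e\<in>E. j\<in>e}. (\<Sum>v\<in>e. x v ^ k) - real k * (\<Prod>v\<in>e. x v))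
     + (\<Sum>e\<in>{e\<in>E. j\<notin>e}. (\<Sum>v\<in>e. x v ^ k) - real k * (\<Prod>v\<in>e. x v))"
    unfolding laplacian_form_def using assms(1)
    by (subst sum.union_disjoint[symmetric]) (auto intro: sum.cong)
  moreover have "(\<Sum>e\<in>{e\<in>E. j\<in>e}. (\<Sum>v\<in>e. x v ^ k) - real k * (\<Prod>v\<in>e. x v))
      = (\<Sum>e\<in>{e\<in>E. j\<in>e}. \<Sum>v\<in>e. x v ^ k)"
    using assms by (intro sum.cong) auto
  ultimately show ?thesis by simp
qed

lemma swap:
  fixes f :: "nat \<Rightarrow> real"
  assumes "finite V" "finite F" "\<forall>e\<in>F. e \<subseteq> V"
  shows "(\<Sum>e\<in>F. \<Sum>v\<in>e. f v) = (\<Sum>v\<in>V. f v * card {e\<in>F. v\<in>e})"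
proof -
  have "(\<Sum>e\<in>F. \<Sum>v\<in>e. f v) = (\<Sum>e\<in>F. \<Sum>v\<in>V. if v \<in> e then f v else 0)"
  proof (rule sum.cong[OF refl])
    fix e assume "e \<in> F"
    then have "e = {v\<in>V. v \<in> e}" using assms by auto
    then show "(\<Sum>v\<in>e. f v) = (\<Sum>v\<in>V. if v \<in> e then f v else 0)"
      using assms(1) by (metis (no_types) sum.inter_filter)
  qed
  also have "\<dots> = (\<Sum>v\<in>V. \<Sum>e\<in>F. if v \<in> e then f v else 0)" by (rule sum.swap)
  also have "\<dots> = (\<Sum>v\<in>V. f v * card {e\<in>F. v\<in>e})"
  proof (rule sum.cong[OF refl])
    fix v
    have "(\<Sum>e\<in>F. if v \<in> e then f v else 0) = (\<Sum>e\<in>{e\<in>F. v\<in>e}. f v)"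
      using sum.inter_filter[of F "\<lambda>_. f v" "\<lambda>e. v\<in>e", symmetric] assms(2) by simp
    then show "(\<Sum>e\<in>F. if v \<in> e then f v else 0) = f v * card {e\<in>F. v\<in>e}" by simp
  qed
  finally show ?thesis .
qed


context
  fixes n k :: nat and E :: "nat set set"
  assumes ku: "k_uniform_hypergraph n k E" and k2: "k \<ge> 2"
begin

lemma edge: "e \<in> E \<Longrightarrow> e \<subseteq> {1..n} \<and> card e = k \<and> finite e"
  using ku unfolding k_uniform_hypergraph_def by (auto intro: finite_subset)

lemma finE: "finite E"
proof -
  have "E \<subseteq> Pow {1..n}" using edge by auto
  then show ?thesis by (rule finite_subset) simp
qed

lemma LB:
  fixes x :: "nat \<Rightarrow> real"
  assumes "\<forall>v\<in>{1..n}. x v \<ge> 0" "x j = 0"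
  shows "(\<Sum>v\<in>{1..n}. x v ^ k * card {e\<in>E. v\<in>e \<and> j\<in>e}) \<le> laplacian_form k E x"
proof -
  have sp: "laplacian_form k E x = (\<Sum>e\<in>{e\<in>E. j\<in>e}. \<Sum>v\<in>e. x v ^ k)
     + (\<Sum>e\<in>{e\<in>E. j\<notin>e}. (\<Sum>v\<in>e. x v ^ k) - real k * (\<Prod>v\<in>e. x v))"
    by (rule lf_split) (use finE edge assms in auto)
  have B: "0 \<le> (\<Sum>e\<in>{e\<in>E. j\<notin>e}. (\<Sum>v\<in>e. x v ^ k) - real k * (\<Prod>v\<in>e. x v))"
  proof (rule sum_nonneg)
    fix e assume "e \<in> {e\<in>E. j\<notin>e}"
    then have "e \<in> E" by auto
    then have "real k * (\<Prod>v\<in>e. x v) \<le> (\<Sum>v\<in>e. x v ^ k)"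
      using edge[of e] k2 assms(1) by (intro amgm) auto
    then show "0 \<le> (\<Sum>v\<in>e. x v ^ k) - real k * (\<Prod>v\<in>e. x v)" by simp
  qed
  have "(\<Sum>e\<in>{e\<in>E. j\<in>e}. \<Sum>v\<in>e. x v ^ k) = (\<Sum>v\<in>{1..n}. x v ^ k * card {e\<in>{e\<in>E. j\<in>e}. v\<in>e})"
    by (rule swap) (use finE edge in auto)
  also have "\<dots> = (\<Sum>v\<in>{1..n}. x v ^ k * card {e\<in>E. v\<in>e \<and> j\<in>e})"
    by (intro sum.cong refl arg_cong[where f="\<lambda>S. x _ ^ k * real (card S)"]) auto
  finally show ?thesis using sp B by linarith
qed

lemma Lw:
  fixes c :: real
  assumes "j \<in> {1..n}"
  shows "laplacian_form k E (\<lambda>v. if v = j then 0 else c) =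
           (\<Sum>v\<in>{1..n}. (if v = j then 0 else c) ^ k * card {e\<in>E. v\<in>e \<and> j\<in>e})"
    and "laplacian_form k E (\<lambda>v. if v = j then 0 else c) = real (hdegree E j) * (real k - 1) * c ^ k"
proof -
  define w where "w = (\<lambda>v::nat. if v = j then 0 else c)"
  have sp: "laplacian_form k E w = (\<Sum>e\<in>{e\<in>E. j\<in>e}. \<Sum>v\<in>e. w v ^ k)
     + (\<Sum>e\<in>{e\<in>E. j\<notin>e}. (\<Sum>v\<in>e. w v ^ k) - real k * (\<Prod>v\<in>e. w v))"
    by (rule lf_split) (use finE edge in \<open>auto simp: w_def\<close>)
  have B: "(\<Sum>e\<in>{e\<in>E. j\<notin>e}. (\<Sum>v\<in>e. w v ^ k) - real k * (\<Prod>v\<in>e. w v)) = 0"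
  proof (rule sum.neutral, rule ballI)
    fix e assume "e \<in> {e\<in>E. j\<notin>e}"
    then have e: "e \<in> E" "j \<notin> e" by auto
    have "(\<Sum>v\<in>e. w v ^ k) = (\<Sum>v\<in>e. c ^ k)" using e by (intro sum.cong) (auto simp: w_def)
    moreover have "(\<Prod>v\<in>e. w v) = (\<Prod>v\<in>e. c)" using e by (intro prod.cong) (auto simp: w_def)
    ultimately show "(\<Sum>v\<in>e. w v ^ k) - real k * (\<Prod>v\<in>e. w v) = 0" using edge[OF e(1)] by simp
  qed
  have A: "(\<Sum>e\<in>{e\<in>E. j\<in>e}. \<Sum>v\<in>e. w v ^ k) = (\<Sum>e\<in>{e\<in>E. j\<in>e}. (real k - 1) * c ^ k)"
  proof (rule sum.cong[OF refl])
    fix e assume "e \<in> {e\<in>E. j\<in>e}"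
    then have e: "e \<in> E" "j \<in> e" by auto
    have fe: "finite e" "card e = k" using edge[OF e(1)] by auto
    have "(\<Sum>v\<in>e. w v ^ k) = w j ^ k + (\<Sum>v\<in>e - {j}. w v ^ k)"
      using fe e by (simp add: sum.remove)
    also have "\<dots> = (\<Sum>v\<in>e - {j}. c ^ k)" using k2 by (auto simp: w_def intro!: sum.cong)
    also have "\<dots> = real (k - 1) * c ^ k" using fe e by simp
    finally show "(\<Sum>v\<in>e. w v ^ k) = (real k - 1) * c ^ k" using k2 by (simp add: of_nat_diff)
  qed
  have "(\<Sum>e\<in>{e\<in>E. j\<in>e}. \<Sum>v\<in>e. w v ^ k) = (\<Sum>v\<in>{1..n}. w v ^ k * card {e\<in>{e\<in>E. j\<in>e}. v\<in>e})"
    by (rule swap) (use finE edge in auto)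
  also have "\<dots> = (\<Sum>v\<in>{1..n}. w v ^ k * card {e\<in>E. v\<in>e \<and> j\<in>e})"
    by (intro sum.cong refl arg_cong[where f="\<lambda>S. w _ ^ k * real (card S)"]) auto
  finally show "laplacian_form k E (\<lambda>v. if v = j then 0 else c) =
           (\<Sum>v\<in>{1..n}. (if v = j then 0 else c) ^ k * card {e\<in>E. v\<in>e \<and> j\<in>e})"
    using sp B by (simp add: w_def)
  show "laplacian_form k E (\<lambda>v. if v = j then 0 else c) = real (hdegree E j) * (real k - 1) * c ^ k"
    using sp B A by (simp add: w_def hdegree_def)
qed

lemma Sw:
  fixes c :: real
  assumes "j \<in> {1..n}"
  shows "(\<Sum>v\<in>{1..n}. (if v = j then 0 else c) ^ k) = (real n - 1) * c ^ k"
proof -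
  have "(\<Sum>v\<in>{1..n}. (if v = j then 0 else c) ^ k) = (if j = j then 0 else c) ^ k + (\<Sum>v\<in>{1..n} - {j}. (if v = j then 0 else c) ^ k)"
    using assms by (subst sum.remove) auto
  also have "\<dots> = (\<Sum>v\<in>{1..n} - {j}. c ^ k)" using k2 by (auto intro!: sum.cong)
  also have "\<dots> = real (n - 1) * c ^ k" using assms by simp
  finally show ?thesis using assms by (simp add: of_nat_diff)
qed


lemma pair:
  fixes A :: real
  assumes n2: "n \<ge> 2" and ij: "j \<in> {1..n}" "i \<in> {1..n}" "i \<noteq> j"
    and low: "\<And>x. (\<forall>v\<in>{1..n}. x v \<ge> 0) \<Longrightarrow> (\<Sum>v\<in>{1..n}. x v ^ k) = 1 \<Longrightarrow> x j = 0 \<Longrightarrow> A \<le> laplacian_form k E x"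
    and L1: "laplacian_form k E (\<lambda>v. if v = j then 0 else 1) = A * (real n - 1)"
  shows "real (card {e\<in>E. i\<in>e \<and> j\<in>e}) = A"
proof -
  define y where "y = (\<lambda>(t::real) v. if v = j then 0 else if v = i then 1 + t else (1::real))"
  define d where "d = hdegree E i"
  define b where "b = card {e\<in>E. i\<in>e \<and> j\<notin>e}"
  define cc where "cc = card {e\<in>E. i\<in>e \<and> j\<in>e}"
  have y0: "y 0 = (\<lambda>v. if v = j then 0 else 1)" by (auto simp: y_def)
  have dbc: "d = b + cc"
  proof -
    have "{e\<in>E. i\<in>e} = {e\<in>E. i\<in>e \<and> j\<notin>e} \<union> {e\<in>E. i\<in>e \<and> j\<in>e}" by auto
    then show ?thesis unfolding d_def b_def cc_def hdegree_def
      by (simp add: card_Un_disjoint finE) (subst card_Un_disjoint, use finE in auto)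
  qed
  have edge_eq: "(\<Sum>v\<in>e. y t v ^ k) - real k * (\<Prod>v\<in>e. y t v) =
      ((\<Sum>v\<in>e. y 0 v ^ k) - real k * (\<Prod>v\<in>e. y 0 v))
      + (if i \<in> e then (1 + t) ^ k - 1 else 0) - real k * (if i \<in> e \<and> j \<notin> e then t else 0)"
    if e: "e \<in> E" for e and t :: real
  proof (cases "i \<in> e")
    case False
    have "(\<Sum>v\<in>e. y t v ^ k) = (\<Sum>v\<in>e. y 0 v ^ k)" using False by (intro sum.cong) (auto simp: y_def)
    moreover have "(\<Prod>v\<in>e. y t v) = (\<Prod>v\<in>e. y 0 v)" using False by (intro prod.cong) (auto simp: y_def)
    ultimately show ?thesis using False by simp
  next
    case True
    have fe: "finite e" using edge[OF e] by auto
    have s1: "(\<Sum>v\<in>e. y t v ^ k) = y t i ^ k + (\<Sum>v\<in>e - {i}. y t v ^ k)"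
      using fe True by (simp add: sum.remove)
    have s0: "(\<Sum>v\<in>e. y 0 v ^ k) = y 0 i ^ k + (\<Sum>v\<in>e - {i}. y 0 v ^ k)"
      using fe True by (simp add: sum.remove)
    have p1: "(\<Prod>v\<in>e. y t v) = y t i * (\<Prod>v\<in>e - {i}. y t v)"
      using fe True by (simp add: prod.remove)
    have p0: "(\<Prod>v\<in>e. y 0 v) = y 0 i * (\<Prod>v\<in>e - {i}. y 0 v)"
      using fe True by (simp add: prod.remove)
    have ss: "(\<Sum>v\<in>e - {i}. y t v ^ k) = (\<Sum>v\<in>e - {i}. y 0 v ^ k)" by (intro sum.cong) (auto simp: y_def)
    have pp: "(\<Prod>v\<in>e - {i}. y t v) = (\<Prod>v\<in>e - {i}. y 0 v)" by (intro prod.cong) (auto simp: y_def)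
    have yi: "y t i = 1 + t" "y 0 i = 1" using ij by (auto simp: y_def)
    show ?thesis
    proof (cases "j \<in> e")
      case True
      then have "(\<Prod>v\<in>e - {i}. y 0 v) = 0" using fe ij by (intro prod_zero) (auto simp: y_def)
      then show ?thesis using s1 s0 p1 p0 ss pp yi True \<open>i \<in> e\<close> by simp
    next
      case False
      then have "(\<Prod>v\<in>e - {i}. y 0 v) = 1" by (intro prod.neutral) (auto simp: y_def)
      then show ?thesis using s1 s0 p1 p0 ss pp yi False \<open>i \<in> e\<close> by (simp add: algebra_simps)
    qed
  qed
  have Ly: "laplacian_form k E (y t) = A * (real n - 1) + d * ((1 + t) ^ k - 1) - real k * t * b" for t :: real
  proof -
    have "laplacian_form k E (y t) = (\<Sum>e\<in>E. ((\<Sum>v\<in>e. y 0 v ^ k) - real k * (\<Prod>v\<in>e. y 0 v))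
      + (if i \<in> e then (1 + t) ^ k - 1 else 0) - real k * (if i \<in> e \<and> j \<notin> e then t else 0))"
      unfolding laplacian_form_def by (rule sum.cong[OF refl]) (rule edge_eq)
    also have "\<dots> = laplacian_form k E (y 0) + (\<Sum>e\<in>E. (if i \<in> e then (1 + t) ^ k - 1 else 0))
        - real k * (\<Sum>e\<in>E. (if i \<in> e \<and> j \<notin> e then t else 0))"
      unfolding laplacian_form_def by (simp add: sum.distrib sum_subtractf sum_distrib_left)
    also have "(\<Sum>e\<in>E. (if i \<in> e then (1 + t) ^ k - 1 else 0)) = d * ((1 + t) ^ k - 1)"
      using sum.inter_filter[OF finE, of "\<lambda>_. (1 + t) ^ k - 1" "\<lambda>e. i \<in> e", symmetric]
      by (simp add: d_def hdegree_def)
    also have "(\<Sum>e\<in>E. (if i \<in> e \<and> j \<notin> e then t else 0)) = b * t"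
      using sum.inter_filter[OF finE, of "\<lambda>_. t" "\<lambda>e. i \<in> e \<and> j \<notin> e", symmetric]
      by (simp add: b_def)
    finally show ?thesis using L1 y0 by simp
  qed
  have Sy: "(\<Sum>v\<in>{1..n}. y t v ^ k) = (real n - 1) + ((1 + t) ^ k - 1)" for t  :: real
  proof -
    have "(\<Sum>v\<in>{1..n}. y t v ^ k) = y t i ^ k + (\<Sum>v\<in>{1..n} - {i}. y t v ^ k)"
      using ij by (subst sum.remove[of _ i]) auto
    moreover have "(\<Sum>v\<in>{1..n}. y 0 v ^ k) = y 0 i ^ k + (\<Sum>v\<in>{1..n} - {i}. y 0 v ^ k)"
      using ij by (subst sum.remove[of _ i]) auto
    moreover have "(\<Sum>v\<in>{1..n} - {i}. y t v ^ k) = (\<Sum>v\<in>{1..n} - {i}. y 0 v ^ k)"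
      by (intro sum.cong) (auto simp: y_def)
    moreover have "(\<Sum>v\<in>{1..n}. y 0 v ^ k) = real n - 1"
      using Sw[OF ij(1), of 1] y0 by simp
    moreover have "y t i = 1 + t" "y 0 i = 1" using ij by (auto simp: y_def)
    ultimately show ?thesis by simp
  qed
  have ge: "A * ((real n - 1) + ((1 + t) ^ k - 1)) \<le> laplacian_form k E (y t)" if t: "t > -1" for t
  proof -
    define S where "S = (real n - 1) + ((1 + t) ^ k - 1)"
    have "(1 + t) ^ k > 0" using t by simp
    then have Sp: "S > 0" using n2 unfolding S_def by simp
    define s where "s = root k (1 / S)"
    have sk: "s ^ k = 1 / S" using k2 Sp unfolding s_def by (simp add: real_root_pow_pos2)
    have s0: "s \<ge> 0" using Sp unfolding s_def by (simp add: real_root_ge_zero)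
    define x where "x = (\<lambda>v. s * y t v)"
    have "A \<le> laplacian_form k E x"
    proof (rule low)
      show "\<forall>v\<in>{1..n}. 0 \<le> x v" using s0 t by (auto simp: x_def y_def)
      show "(\<Sum>v\<in>{1..n}. x v ^ k) = 1"
        unfolding x_def power_mult_distrib sum_distrib_left[symmetric] Sy sk S_def[symmetric]
        using Sp by simp
      show "x j = 0" by (simp add: x_def y_def)
    qed
    also have "laplacian_form k E x = s ^ k * laplacian_form k E (y t)"
      unfolding x_def by (rule lf_scale) (use edge in auto)
    finally have "A \<le> laplacian_form k E (y t) / S" using sk by simp
    then show ?thesis using Sp unfolding S_def[symmetric] by (simp add: pos_le_divide_eq mult.commute)
  qed
  define g where "g = (\<lambda>t::real. (d - A) * ((1 + t) ^ k - 1) - real k * b * t)"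
  have gnn: "g t \<ge> 0" if "t > -1" for t
    using ge[OF that] Ly[of t] unfolding g_def by (simp add: algebra_simps)
  have g0: "g 0 = 0" by (simp add: g_def)
  have D: "(g has_real_derivative ((d - A) * (real k * (1 + 0) ^ (k - 1)) - real k * b)) (at 0)"
    unfolding g_def by (auto intro!: derivative_eq_intros)
  have "(d - A) * (real k * (1 + 0) ^ (k - 1)) - real k * b = 0"
  proof (rule DERIV_local_min[OF D, of 1])
    show "0 < (1::real)" by simp
    show "\<forall>y. \<bar>0 - y\<bar> < 1 \<longrightarrow> g 0 \<le> g y" using gnn g0 by auto
  qed
  then have "real k * (d - A - b) = 0" by (simp add: algebra_simps)
  then have "A = real d - real b" using k2 by simp
  then show ?thesis using dbc unfolding cc_def by simp
qed

end


lemma k_ge2: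
  assumes "k_uniform_hypergraph n k E" "hconnected n E" "n \<ge> 2"
  shows "k \<ge> 2"
proof -
  have "1 \<in> {1..n}" "2 \<in> {1..n}" using assms(3) by auto
  then obtain vs es where p: "is_hpath E vs es" "hd vs = 1" "last vs = 2"
    using assms(2) unfolding hconnected_def by blast
  have ne: "vs \<noteq> []" and len: "length es + 1 = length vs" and dv: "distinct vs"
    and ed: "\<forall>i < length es. es ! i \<in> E \<and> vs ! i \<in> es ! i \<and> vs ! (Suc i) \<in> es ! i"
    using p(1) unfolding is_hpath_def by auto
  have "length vs \<noteq> 1"
  proof
    assume "length vs = 1"
    then obtain a where "vs = [a]" by (cases vs) auto
    then show False using p by simp
  qed
  then have l: "0 < length es" using len ne by (cases es) auto
  then have e0: "es ! 0 \<in> E" "vs ! 0 \<in> es ! 0" "vs ! 1 \<in> es ! 0" using ed by auto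
  have "1 < length vs" using l len by linarith
  then have "vs ! 0 \<noteq> vs ! 1" using dv ne nth_eq_iff_index_eq[of vs 0 1] by simp
  have fe: "finite (es ! 0)" "card (es ! 0) = k"
    using assms(1) e0(1) unfolding k_uniform_hypergraph_def by (auto intro: finite_subset)
  have "card {vs ! 0, vs ! 1} \<le> card (es ! 0)" using e0 fe by (intro card_mono) auto
  then show ?thesis using \<open>vs ! 0 \<noteq> vs ! 1\<close> fe by simp
qed

theorem theorem3p8:
  fixes n k :: nat and E :: "nat set set"
  assumes "k_uniform_hypergraph n k E"
    and "hconnected n E"
    and "n \<ge> 2"
  shows "is_2_design n k E \<longleftrightarrow>
    (\<forall>j\<in>{1..n}. inverse_perron n k E j = real (max_degree n E) * (real k - 1) / (real n - 1))"
proof -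
  note ku = assms(1)
  have k2: "k \<ge> 2" using k_ge2[OF assms] .
  define V where "V = {1..n}"
  define Sset where "Sset j = {laplacian_form k E x | x.
      (\<forall>i\<in>{1..n}. x i \<ge> 0) \<and> (\<Sum>i=1..n. x i ^ k) = 1 \<and> x j = 0}" for j
  have ip: "inverse_perron n k E j = Inf (Sset j)" for j unfolding inverse_perron_def Sset_def by simp
  have nn: "0 \<le> laplacian_form k E x" if "\<forall>i\<in>{1..n}. x i \<ge> 0" "x j = 0" for x j
  proof -
    have "0 \<le> (\<Sum>v\<in>{1..n}. x v ^ k * card {e\<in>E. v\<in>e \<and> j\<in>e})"
      using that by (intro sum_nonneg) auto
    also have "\<dots> \<le> laplacian_form k E x" using LB[OF ku k2 that] .
    finally show ?thesis .
  qed
  have bdd: "bdd_below (Sset j)" for j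
    unfolding Sset_def by (rule bdd_belowI[of _ 0]) (use nn in auto)
  define c where "c = root k (1 / (real n - 1))"
  have ck: "c ^ k = 1 / (real n - 1)" using k2 assms(3) unfolding c_def by (simp add: real_root_pow_pos2)
  have c0: "c \<ge> 0" using assms(3) unfolding c_def by (simp add: real_root_ge_zero)
  define u where "u j = (\<lambda>v::nat. if v = j then 0 else c)" for j
  have uS: "laplacian_form k E (u j) \<in> Sset j" if "j \<in> {1..n}" for j
  proof -
    have "(\<Sum>i=1..n. u j i ^ k) = 1"
      using Sw[OF ku k2 that, of c] ck assms(3) unfolding u_def by simp
    then show ?thesis unfolding Sset_def using c0 by (auto simp: u_def)
  qed
  have Lu: "laplacian_form k E (u j) = real (hdegree E j) * (real k - 1) / (real n - 1)"
    if "j \<in> {1..n}" for j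
    using Lw(2)[OF ku k2 that, of c] ck unfolding u_def by simp
  have Vne: "{1..n} \<noteq> {}" using assms(3) by auto
  show ?thesis
  proof
    assume "is_2_design n k E"
    then obtain b r lam where d: "is_2_design_params n b k r lam E" unfolding is_2_design_def by blast
    have reg: "\<forall>i\<in>{1..n}. hdegree E i = r"
      and lamd: "\<forall>x\<in>{1..n}. \<forall>y\<in>{1..n}. x \<noteq> y \<longrightarrow> card {e\<in>E. x \<in> e \<and> y \<in> e} = lam"
      using d unfolding is_2_design_params_def by auto
    have md: "max_degree n E = r"
    proof -
      have "hdegree E ` {1..n} = {r}" using reg Vne by auto
      then show ?thesis unfolding max_degree_def by simp
    qed
    have gen: "(\<Sum>v\<in>{1..n}. x v ^ k * card {e\<in>E. v\<in>e \<and> j\<in>e}) = lam"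
      if j: "j \<in> {1..n}" and x: "(\<Sum>i=1..n. x i ^ k) = 1" "x j = 0" for x :: "nat \<Rightarrow> real" and j
    proof -
      have "(\<Sum>v\<in>{1..n}. x v ^ k * card {e\<in>E. v\<in>e \<and> j\<in>e}) = (\<Sum>v\<in>{1..n}. x v ^ k * lam)"
      proof (rule sum.cong[OF refl])
        fix v assume v: "v \<in> {1..n}"
        show "x v ^ k * card {e\<in>E. v\<in>e \<and> j\<in>e} = x v ^ k * lam"
          by (cases "v = j") (use lamd j v x(2) k2 in auto)
      qed
      also have "\<dots> = lam" using x(1) by (simp add: sum_distrib_right[symmetric])
      finally show ?thesis .
    qed
    show "\<forall>j\<in>{1..n}. inverse_perron n k E j = real (max_degree n E) * (real k - 1) / (real n - 1)"
    proof
      fix j assume j: "j \<in> {1..n}"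
      have ul: "laplacian_form k E (u j) = lam"
      proof -
        have "(\<Sum>i=1..n. u j i ^ k) = 1"
          using Sw[OF ku k2 j, of c] ck assms(3) unfolding u_def by simp
        then show ?thesis using Lw(1)[OF ku k2 j, of c] gen[OF j, of "u j"] unfolding u_def by simp
      qed
      have "Inf (Sset j) = laplacian_form k E (u j)"
      proof (rule cInf_eq_minimum)
        show "laplacian_form k E (u j) \<in> Sset j" using uS[OF j] .
        fix z assume "z \<in> Sset j"
        then obtain x where x: "z = laplacian_form k E x" "\<forall>i\<in>{1..n}. x i \<ge> 0"
          "(\<Sum>i=1..n. x i ^ k) = 1" "x j = 0" unfolding Sset_def by blast
        show "laplacian_form k E (u j) \<le> z"
          using LB[OF ku k2 x(2,4)] gen[OF j x(3,4)] ul x(1) by simp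
      qed
      then show "inverse_perron n k E j = real (max_degree n E) * (real k - 1) / (real n - 1)"
        using ip Lu[OF j] reg j md by simp
    qed
  next
    assume H: "\<forall>j\<in>{1..n}. inverse_perron n k E j = real (max_degree n E) * (real k - 1) / (real n - 1)"
    define D where "D = max_degree n E"
    define A where "A = real D * (real k - 1) / (real n - 1)"
    have km: "real k - 1 > 0" using k2 by simp
    have nm: "real n - 1 > 0" using assms(3) by simp
    have degD: "hdegree E j = D" if j: "j \<in> {1..n}" for j
    proof -
      have le: "hdegree E j \<le> D" unfolding D_def max_degree_def using j by (intro Max_ge) auto
      have "A \<le> laplacian_form k E (u j)"
        using cInf_lower[OF uS[OF j] bdd] H j ip unfolding A_def D_def by simp
      then have "real D * (real k - 1) / (real n - 1) \<le> real (hdegree E j) * (real k - 1) / (real n - 1)"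
        using Lu[OF j] unfolding A_def by simp
      then have "real D * (real k - 1) \<le> real (hdegree E j) * (real k - 1)"
        using nm by (simp add: divide_le_cancel)
      then have "real D \<le> real (hdegree E j)" using km by simp
      then show ?thesis using le by simp
    qed
    have pr: "real (card {e\<in>E. i\<in>e \<and> j\<in>e}) = A"
      if j: "j \<in> {1..n}" and i: "i \<in> {1..n}" and ij: "i \<noteq> j" for i j
    proof (rule pair[OF ku k2 assms(3) j i ij])
      fix x :: "nat \<Rightarrow> real"
      assume x: "\<forall>v\<in>{1..n}. x v \<ge> 0" "(\<Sum>v\<in>{1..n}. x v ^ k) = 1" "x j = 0"
      then have "laplacian_form k E x \<in> Sset j" unfolding Sset_def by auto
      then show "A \<le> laplacian_form k E x"
        using cInf_lower[OF _ bdd] H j ip unfolding A_def D_def by fastforce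
    next
      show "laplacian_form k E (\<lambda>v. if v = j then 0 else 1) = A * (real n - 1)"
        using Lw(2)[OF ku k2 j, of 1] degD[OF j] nm unfolding A_def by simp
    qed
    have 12: "1 \<in> {1..n}" "2 \<in> {1..n}" using assms(3) by auto
    have "is_2_design_params n (card E) k D (card {e\<in>E. 1\<in>e \<and> 2\<in>e}) E"
      unfolding is_2_design_params_def
    proof (intro conjI ballI impI)
      show "k_uniform_hypergraph n k E" by (rule ku)
      show "card E = card E" ..
      show "hdegree E i = D" if "i \<in> {1..n}" for i using degD that .
      fix x y assume xy: "x \<in> {1..n}" "y \<in> {1..n}" "x \<noteq> y"
      have "real (card {e\<in>E. x\<in>e \<and> y\<in>e}) = real (card {e\<in>E. 1\<in>e \<and> 2\<in>e})"
        using pr[OF xy(2) xy(1) xy(3)] pr[of 2 1] 12 by simp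
      then show "card {e\<in>E. x\<in>e \<and> y\<in>e} = card {e\<in>E. 1\<in>e \<and> 2\<in>e}" by simp
    qed
    then show "is_2_design n k E" unfolding is_2_design_def by blast
  qed
qed

end
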